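(* For every $\varepsilon>0$ there exist a binary sequence $\boldsymbol{a}=(a_n)_{n=1}^\infty\in\{0,1\}^{\mathbb{N}}$ and a sequence $(N_m)_{m=1}^\infty$ of natural numbers such that: (i) $\liminf_{n\to\infty}\frac{1}{n}\sum_{j=1}^n a_j\geq 1-\varepsilon$; and (ii) for all $m\in\mathbb{N}$ and $j\in\mathbb{N}$, the finite sequence $(a_j,a_{j+1},\ldots,a_{j+N_m-1})$ contains $m$ consecutive zeros. *)

theory Defs
  imports "HOL-Analysis.Analysis"
begin

end

theory Submission
  imports Defs
begin

lemma sum_m_pow2: "(\<Sum>m=0..n. real m / 2^m) = 2 - (real n + 2) / 2^n"
proof (induction n)
  case 0 then show ?case by simp
next
  case (Suc n)
  then show ?case by (simp add: field_simps)
qed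

lemma sum_m_pow2_le: "(\<Sum>m=1..n. real m / 2^m) \<le> 2"
proof -
  have "(\<Sum>m=1..n. real m / 2^m) \<le> (\<Sum>m=0..n. real m / 2^m)"
    by (rule sum_mono2) auto
  also have "\<dots> \<le> 2" unfolding sum_m_pow2 by simp
  finally show ?thesis .
qed

lemma card_level:
  fixes Q m n :: nat
  assumes "Q > 0"
  shows "card {k\<in>{1..n}. Q \<le> k \<and> k mod Q < m} \<le> (n div Q) * m"
proof -
  have "{k\<in>{1..n}. Q \<le> k \<and> k mod Q < m} \<subseteq> (\<lambda>(q,r). q*Q+r) ` ({1..n div Q} \<times> {..<m})"
  proof
    fix k assume k: "k \<in> {k\<in>{1..n}. Q \<le> k \<and> k mod Q < m}"
    have "k = (k div Q)*Q + k mod Q" by simp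
    moreover have "k div Q \<ge> 1" proof -
      have "Q div Q \<le> k div Q" using k by (intro div_le_mono) auto
      thus ?thesis using assms by simp
    qed
    moreover have "k div Q \<le> n div Q" using k by (simp add: div_le_mono)
    ultimately show "k \<in> (\<lambda>(q,r). q*Q+r) ` ({1..n div Q} \<times> {..<m})"
      using k by (intro image_eqI[of _ _ "(k div Q, k mod Q)"]) auto
  qed
  hence "card {k\<in>{1..n}. Q \<le> k \<and> k mod Q < m} \<le> card ((\<lambda>(q,r). q*Q+r) ` ({1..n div Q} \<times> {..<m}))"
    by (intro card_mono) auto
  also have "\<dots> \<le> card ({1..n div Q} \<times> {..<m})" by (rule card_image_le) auto
  also have "\<dots> = (n div Q) * m" by (simp add: card_cartesian_product)
  finally show ?thesis .
qed

theorem lemma2p2: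
  fixes \<epsilon> :: real
  assumes "\<epsilon> > 0"
  shows "\<exists>(a :: nat \<Rightarrow> nat) (N :: nat \<Rightarrow> nat).
           (\<forall>n\<ge>1. a n \<in> {0, 1}) \<and>
           liminf (\<lambda>n. ereal ((\<Sum>j=1..n. real (a j)) / real n)) \<ge> ereal (1 - \<epsilon>) \<and>
           (\<forall>m\<ge>1. \<forall>j\<ge>1. \<exists>i. j \<le> i \<and> i + m \<le> j + N m \<and>
                (\<forall>k\<in>{i..<i+m}. a k = 0))"
proof -
  obtain c :: nat where c: "(1/2) ^ c < \<epsilon> / 2"
    using real_arch_pow_inv[of "\<epsilon>/2" "1/2"] assms by auto
  have c': "2 / 2^c \<le> \<epsilon>" using c by (simp add: power_divide field_simps)
  define Q :: "nat \<Rightarrow> nat" where "Q m = 2^(m+c)" for m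
  have Qpos: "Q m > 0" for m by (simp add: Q_def)
  have mQ: "m \<le> Q m" for m
  proof -
    have "m < 2^m" by (rule less_exp)
    also have "(2::nat)^m \<le> 2^(m+c)" by (rule power_increasing) auto
    finally show ?thesis by (simp add: Q_def)
  qed
  define P where "P k = (\<exists>m\<in>{1..k}. Q m \<le> k \<and> k mod Q m < m)" for k
  define a :: "nat \<Rightarrow> nat" where "a k = (if P k then 0 else 1)" for k
  define N :: "nat \<Rightarrow> nat" where "N m = Q m + m" for m
  have A: "\<forall>n\<ge>1. a n \<in> {0, 1}" by (simp add: a_def)
  have C: "\<forall>m\<ge>1. \<forall>j\<ge>1. \<exists>i. j \<le> i \<and> i + m \<le> j + N m \<and> (\<forall>k\<in>{i..<i+m}. a k = 0)"
  proof (intro allI impI)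
    fix m j :: nat assume m: "m \<ge> 1" and j: "j \<ge> 1"
    define i where "i = (j div Q m + 1) * Q m"
    have i1: "j \<le> i" unfolding i_def
      using Qpos[of m] by (metis div_mult_mod_eq less_imp_le_nat mod_less_divisor add.commute
          add_mult_distrib mult_1 add_le_mono order_refl)
    have i2: "i \<le> j + Q m" unfolding i_def
      by (metis add.commute add_mult_distrib div_times_less_eq_dividend mult_1 add_le_mono1)
    have iQ: "Q m \<le> i" unfolding i_def by simp
    have "\<forall>k\<in>{i..<i+m}. a k = 0"
    proof
      fix k assume k: "k \<in> {i..<i+m}"
      then obtain r where r: "k = i + r" "r < m" by (metis atLeastLessThan_iff le_Suc_ex nat_add_left_cancel_less)
      have "k mod Q m = r mod Q m" unfolding r i_def by (metis mod_mult_self3)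
      also have "\<dots> = r" using r mQ[of m] by simp
      finally have "k mod Q m < m" using r by simp
      moreover have "Q m \<le> k" using iQ r by simp
      moreover have "m \<in> {1..k}" using m mQ[of m] \<open>Q m \<le> k\<close> by simp
      ultimately show "a k = 0" unfolding a_def P_def by auto
    qed
    moreover have "i + m \<le> j + N m" using i2 by (simp add: N_def)
    ultimately show "\<exists>i. j \<le> i \<and> i + m \<le> j + N m \<and> (\<forall>k\<in>{i..<i+m}. a k = 0)"
      using i1 by blast
  qed
  have bound: "(\<Sum>j=1..n. real (a j)) / real n \<ge> 1 - \<epsilon>" if n: "n \<ge> 1" for n
  proof -
    define Z where "Z = {k\<in>{1..n}. P k}"
    have Zsub: "Z \<subseteq> (\<Union>m\<in>{1..n}. {k\<in>{1..n}. Q m \<le> k \<and> k mod Q m < m})"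
    proof
      fix x assume "x \<in> Z"
      then obtain m where "x \<in> {1..n}" "m \<in> {1..x}" "Q m \<le> x" "x mod Q m < m"
        unfolding Z_def P_def by auto
      thus "x \<in> (\<Union>m\<in>{1..n}. {k\<in>{1..n}. Q m \<le> k \<and> k mod Q m < m})"
        by auto
    qed
    have "card Z \<le> card (\<Union>m\<in>{1..n}. {k\<in>{1..n}. Q m \<le> k \<and> k mod Q m < m})"
      by (intro card_mono Zsub) auto
    also have "\<dots> \<le> (\<Sum>m\<in>{1..n}. card {k\<in>{1..n}. Q m \<le> k \<and> k mod Q m < m})"
      by (rule card_UN_le) auto
    also have "\<dots> \<le> (\<Sum>m\<in>{1..n}. (n div Q m) * m)"
      by (intro sum_mono card_level Qpos)
    finally have cz: "real (card Z) \<le> (\<Sum>m\<in>{1..n}. real ((n div Q m) * m))"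
      by (metis of_nat_le_iff of_nat_sum)
    also have "\<dots> \<le> (\<Sum>m\<in>{1..n}. real n / 2^c * (real m / 2^m))"
    proof (intro sum_mono)
      fix m
      have "real (n div Q m) \<le> real n / real (Q m)" by (rule of_nat_div_le_of_nat)
      hence "real (n div Q m) * real m \<le> real n / real (Q m) * real m"
        by (intro mult_right_mono) auto
      thus "real ((n div Q m) * m) \<le> real n / 2^c * (real m / 2^m)"
        by (simp add: Q_def power_add field_simps)
    qed
    also have "\<dots> = real n / 2^c * (\<Sum>m\<in>{1..n}. real m / 2^m)"
      by (simp add: sum_distrib_left)
    also have "\<dots> \<le> real n / 2^c * 2"
      by (intro mult_left_mono sum_m_pow2_le) auto
    also have "\<dots> \<le> real n * \<epsilon>" proof -
      have "real n / 2^c * 2 = real n * (2 / 2^c)" by simp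
      also have "\<dots> \<le> real n * \<epsilon>" using c' by (intro mult_left_mono) auto
      finally show ?thesis .
    qed
    finally have cZ: "real (card Z) \<le> real n * \<epsilon>" .
    have "(\<Sum>j=1..n. real (a j)) = (\<Sum>j\<in>{1..n} - Z. 1)"
      by (rule sum.mono_neutral_cong_right) (auto simp: a_def Z_def)
    also have "\<dots> = real n - real (card Z)"
    proof -
      have sub: "Z \<subseteq> {1..n}" unfolding Z_def by auto
      hence "card Z \<le> n" using card_mono[OF _ sub] by simp
      moreover have "card ({1..n} - Z) = n - card Z"
        using sub by (simp add: card_Diff_subset finite_subset)
      ultimately show ?thesis by simp
    qed
    finally have "(\<Sum>j=1..n. real (a j)) \<ge> real n * (1 - \<epsilon>)" using cZ by (simp add: algebra_simps)
    thus ?thesis using n by (simp add: field_simps)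
  qed
  have B: "liminf (\<lambda>n. ereal ((\<Sum>j=1..n. real (a j)) / real n)) \<ge> ereal (1 - \<epsilon>)"
    by (rule Liminf_bounded) (use bound in \<open>auto simp: eventually_sequentially\<close>)
  show ?thesis using A B C by blast
qed

end
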